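(* Let $P$ be a right-LCM monoid and let $P_1$ be a submonoid of $P$ such that the inclusion $P_1\subseteq P$ is closed under factorization and preserves orthogonality. Then $P_1$ respects the LCM of $P$, i.e. for all $x,y\in P_1$, $xP\cap yP=(xP_1\cap yP_1)P$.
   Context: A monoid $P$ is right-LCM if it is left-cancellative and for all $p,q\in P$ either $pP\cap qP=\emptyset$ or $pP\cap qP=rP$ for some $r\in P$. A submonoid $P_1\subseteq P$ is closed under factorization in $P$ if whenever $x,y\in P$ satisfy $xy\in P_1$, then $x,y\in P_1$ (such a $P_1$ is itself right-LCM). For a right-LCM submonoid $P_1$ of $P$, the inclusion preserves orthogonality if for all $x,y\in P_1$: $xP_1\cap yP_1=\emptyset$ if and only if $xP\cap yP=\emptyset$. *)

theory Defs
  imports Main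
begin

text \<open>The monoid P is the whole type 'a of class monoid_mult; subsets of it are submonoids.\<close>

definition rideal :: "'a::monoid_mult \<Rightarrow> 'a set \<Rightarrow> 'a set" where
  "rideal p S = (\<lambda>s. p * s) ` S"

definition setmult :: "'a::monoid_mult set \<Rightarrow> 'a set \<Rightarrow> 'a set" where
  "setmult A B = {a * b | a b. a \<in> A \<and> b \<in> B}"

definition left_cancellative :: "'a::monoid_mult itself \<Rightarrow> bool" where
  "left_cancellative _ \<longleftrightarrow> (\<forall>p x y::'a. p * x = p * y \<longrightarrow> x = y)"

definition right_LCM :: "'a::monoid_mult itself \<Rightarrow> bool" where
  "right_LCM T \<longleftrightarrow> left_cancellative T \<and>
     (\<forall>p q::'a. rideal p UNIV \<inter> rideal q UNIV = {} \<or>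
                (\<exists>r. rideal p UNIV \<inter> rideal q UNIV = rideal r UNIV))"

definition submonoid :: "'a::monoid_mult set \<Rightarrow> bool" where
  "submonoid P1 \<longleftrightarrow> 1 \<in> P1 \<and> (\<forall>x\<in>P1. \<forall>y\<in>P1. x * y \<in> P1)"

definition closed_under_factorization :: "'a::monoid_mult set \<Rightarrow> bool" where
  "closed_under_factorization P1 \<longleftrightarrow> (\<forall>x y. x * y \<in> P1 \<longrightarrow> x \<in> P1 \<and> y \<in> P1)"

definition preserves_orthogonality :: "'a::monoid_mult set \<Rightarrow> bool" where
  "preserves_orthogonality P1 \<longleftrightarrow>
     (\<forall>x\<in>P1. \<forall>y\<in>P1. (rideal x P1 \<inter> rideal y P1 = {}) \<longleftrightarrow> (rideal x UNIV \<inter> rideal y UNIV = {}))"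

end

theory Submission
  imports Defs
begin

theorem mainTheorem3:
  fixes P1 :: "'a::monoid_mult set"
  assumes "right_LCM TYPE('a)"
    and "submonoid P1"
    and "closed_under_factorization P1"
    and "preserves_orthogonality P1"
  shows "\<forall>x\<in>P1. \<forall>y\<in>P1.
           rideal x UNIV \<inter> rideal y UNIV = setmult (rideal x P1 \<inter> rideal y P1) UNIV"
proof (intro ballI equalityI subsetI)
  fix x y w assume x: "x \<in> P1" and y: "y \<in> P1"
  have sm: "\<And>a b. a \<in> P1 \<Longrightarrow> b \<in> P1 \<Longrightarrow> a * b \<in> P1" using assms(2) unfolding submonoid_def by blast
  have cf: "\<And>a b. a * b \<in> P1 \<Longrightarrow> a \<in> P1 \<and> b \<in> P1" using assms(3) unfolding closed_under_factorization_def by blast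
  {
    assume w: "w \<in> rideal x UNIV \<inter> rideal y UNIV"
    then have ne: "rideal x UNIV \<inter> rideal y UNIV \<noteq> {}" by blast
    then obtain r where r: "rideal x UNIV \<inter> rideal y UNIV = rideal r UNIV"
      using assms(1) unfolding right_LCM_def by blast
    have "rideal x P1 \<inter> rideal y P1 \<noteq> {}"
      using assms(4) x y ne unfolding preserves_orthogonality_def by blast
    then obtain a b where a: "a \<in> P1" and b: "b \<in> P1" and ab: "x * a = y * b"
      unfolding rideal_def by blast
    have "x * a \<in> rideal r UNIV" using r ab unfolding rideal_def by blast
    then obtain c where "x * a = r * c" unfolding rideal_def by blast
    moreover have "x * a \<in> P1" using sm x a by blast
    ultimately have rP: "r \<in> P1" using cf by metis
    have "r \<in> rideal x UNIV \<inter> rideal y UNIV" using r unfolding rideal_def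
      by (metis UNIV_I image_eqI mult.right_neutral)
    then obtain a' b' where ra: "r = x * a'" and rb: "r = y * b'" unfolding rideal_def by blast
    have "a' \<in> P1" "b' \<in> P1" using cf rP ra rb by metis+
    then have rin: "r \<in> rideal x P1 \<inter> rideal y P1" using ra rb unfolding rideal_def by blast
    obtain d where "w = r * d" using w r unfolding rideal_def by blast
    then show "w \<in> setmult (rideal x P1 \<inter> rideal y P1) UNIV"
      using rin unfolding setmult_def by blast
  }
  {
    assume "w \<in> setmult (rideal x P1 \<inter> rideal y P1) UNIV"
    then obtain z q where z: "z \<in> rideal x P1 \<inter> rideal y P1" and wq: "w = z * q"
      unfolding setmult_def by blast
    from z obtain a b where "z = x * a" "z = y * b" unfolding rideal_def by blast
    then show "w \<in> rideal x UNIV \<inter> rideal y UNIV" using wq unfolding rideal_def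
      by (metis IntI UNIV_I image_eqI mult.assoc)
  }
qed

end
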